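(* Let $n\ge1$, $V=\{0,1\}^n$, $\beta=\log_2(3/2)$, and let $(A,B,W)$ be a partition of $V$ with $|A|=2^{n-1}$. Then \[ |\nabla(A,B)| + n^\beta |W| \;\ge\; 2^{n-1}. \]
   Context: $V=\{0,1\}^n$ is the vertex set of the Hamming cube $Q_n$ (vertices adjacent iff they differ in exactly one coordinate). For disjoint $A,B\subseteq V$, $\nabla(A,B)$ is the set of pairs $(x,y)$ with $x\in A$, $y\in B$ and $x,y$ adjacent; so $|\nabla(A,B)|$ is the number of edges of $Q_n$ between $A$ and $B$. *)

theory Defs
  imports Complex_Main
begin

definition cube :: "nat \<Rightarrow> bool list set" where
  "cube n = {x. length x = n}"

definition hadj :: "bool list \<Rightarrow> bool list \<Rightarrow> bool" where
  "hadj x y \<longleftrightarrow> length x = length y \<and> card {i. i < length x \<and> x ! i \<noteq> y ! i} = 1"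

definition nabla :: "bool list set \<Rightarrow> bool list set \<Rightarrow> (bool list \<times> bool list) set" where
  "nabla A B = {(x, y). x \<in> A \<and> y \<in> B \<and> hadj x y}"

end

theory Submission
  imports Defs "HOL-Analysis.Analysis"
begin

definition bet :: real where "bet = log 2 (3/2)"
definition pp :: real where "pp = 1 / bet"

lemma bet_pos: "0 < bet" unfolding bet_def by simp
lemma bet_le1: "bet \<le> 1" unfolding bet_def by simp
lemma bet_ge_half: "1/2 \<le> bet"
proof -
  have "2 powr (1/2) \<le> (3/2::real)"
    proof -
    have "sqrt 2 \<le> (3/2::real)" by (rule power2_le_imp_le) (auto simp: power2_eq_square)
    then show ?thesis by (simp add: powr_half_sqrt)
  qed
  then show ?thesis unfolding bet_def by (subst le_log_iff) auto
qed
lemma two_powr_bet: "2 powr bet = 3/2" unfolding bet_def by simp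
lemma pp_ge1: "1 \<le> pp" using bet_pos bet_le1 unfolding pp_def by simp
lemma pp_le2: "pp \<le> 2" using bet_ge_half unfolding pp_def by (simp add: field_simps)
lemma bet_pp: "bet * pp = 1" using bet_pos unfolding pp_def by simp
lemma three_half_pp: "(3/2) powr pp = 2"
  by (metis two_powr_bet powr_powr bet_pp powr_one zero_le_numeral)

lemma conv_pp:
  fixes x y t :: real
  assumes "0 \<le> x" "0 \<le> y" "0 \<le> t" "t \<le> 1"
  shows "((1-t)*x + t*y) powr pp \<le> (1-t) * x powr pp + t * y powr pp"
proof -
  have tp: "s powr pp \<le> s" if "0 \<le> s" "s \<le> 1" for s :: real
  proof (cases "s = 0")
    case False then show ?thesis using that powr_le_one_le[of s pp] pp_ge1 by auto
  qed simp
  consider "x = 0" | "y = 0" | "0 < x \<and> 0 < y" using assms by linarith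
  then show ?thesis
  proof cases
    case 1
    have "(t*y) powr pp = t powr pp * y powr pp" using assms by (simp add: powr_mult)
    also have "\<dots> \<le> t * y powr pp" using tp[of t] assms by (simp add: mult_right_mono)
    finally show ?thesis using 1 pp_ge1 by simp
  next
    case 2
    have "((1-t)*x) powr pp = (1-t) powr pp * x powr pp" using assms by (simp add: powr_mult)
    also have "\<dots> \<le> (1-t) * x powr pp" using tp[of "1-t"] assms by (simp add: mult_right_mono)
    finally show ?thesis using 2 pp_ge1 by simp
  next
    case 3
    show ?thesis using convex_onD[OF powr_convex[OF pp_ge1], of t x y] 3 assms by simp
  qed
qed

definition nu :: "real \<Rightarrow> real \<Rightarrow> real" where
  "nu a b = (a powr pp + b powr pp) powr bet"

lemma nu_pp: "0 \<le> a \<Longrightarrow> 0 \<le> b \<Longrightarrow> (nu a b) powr pp = a powr pp + b powr pp"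
  unfolding nu_def by (simp add: powr_powr bet_pp)

lemma nu_nonneg: "0 \<le> nu a b" unfolding nu_def by simp

lemma nu_zero2: "0 \<le> a \<Longrightarrow> nu a 0 = a"
  unfolding nu_def using pp_ge1 by (simp add: powr_powr bet_pp mult.commute[of pp])

lemma nu_mono: "0 \<le> a \<Longrightarrow> 0 \<le> b \<Longrightarrow> a \<le> a' \<Longrightarrow> b \<le> b' \<Longrightarrow> nu a b \<le> nu a' b'"
  unfolding nu_def using bet_pos pp_ge1
  by (intro powr_mono2 add_mono) auto

lemma minkowski2:
  fixes a b c e :: real
  assumes "0 \<le> a" "0 \<le> b" "0 \<le> c" "0 \<le> e"
  shows "nu (a+c) (b+e) \<le> nu a b + nu c e"
proof -
  define A where "A = nu a b"
  define C where "C = nu c e"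
  have Ap: "A powr pp = a powr pp + b powr pp" unfolding A_def using assms nu_pp by auto
  have Cp: "C powr pp = c powr pp + e powr pp" unfolding C_def using assms nu_pp by auto
  have A0: "0 \<le> A" "0 \<le> C" unfolding A_def C_def by (auto simp: nu_nonneg)
  show ?thesis
  proof (cases "A = 0 \<or> C = 0")
    case True
    then show ?thesis
    proof
      assume "A = 0"
      then have "a powr pp + b powr pp = 0" using Ap pp_ge1 by simp
      then have "a = 0" "b = 0" using assms
        by (metis add_nonneg_eq_0_iff powr_eq_0_iff powr_ge_zero)+
      then show ?thesis using `A = 0` unfolding A_def C_def by simp
    next
      assume "C = 0"
      then have "c powr pp + e powr pp = 0" using Cp pp_ge1 by simp
      then have "c = 0" "e = 0" using assms
        by (metis add_nonneg_eq_0_iff powr_eq_0_iff powr_ge_zero)+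
      then show ?thesis using `C = 0` unfolding A_def C_def by simp
    qed
  next
    case False
    then have Apos: "0 < A" "0 < C" using A0 by auto
    define t where "t = C / (A + C)"
    have t01: "0 \<le> t" "t \<le> 1" unfolding t_def using Apos by auto
    have omt: "1 - t = A / (A+C)" unfolding t_def using Apos by (simp add: field_simps)
    have key: "(u + v) / (A+C) = (1-t) * (u/A) + t * (v/C)" for u v
    proof -
      have "(1-t) * (u/A) = u/(A+C)" unfolding omt using Apos by (simp add: field_simps)
      moreover have "t * (v/C) = v/(A+C)" unfolding t_def using Apos by (simp add: field_simps)
      ultimately show ?thesis by (simp add: add_divide_distrib)
    qed
    have c1: "((a+c)/(A+C)) powr pp \<le> (1-t) * (a/A) powr pp + t * (c/C) powr pp"
      unfolding key by (rule conv_pp) (use assms Apos t01 in auto)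
    have c2: "((b+e)/(A+C)) powr pp \<le> (1-t) * (b/A) powr pp + t * (e/C) powr pp"
      unfolding key by (rule conv_pp) (use assms Apos t01 in auto)
    have "((a+c) powr pp + (b+e) powr pp) / (A+C) powr pp
        = ((a+c)/(A+C)) powr pp + ((b+e)/(A+C)) powr pp"
    proof -
      have e1: "((a+c)/(A+C)) powr pp = (a+c) powr pp / (A+C) powr pp" by (rule powr_divide)
      have e2: "((b+e)/(A+C)) powr pp = (b+e) powr pp / (A+C) powr pp" by (rule powr_divide)
      show ?thesis unfolding e1 e2 by (rule add_divide_distrib)
    qed
    also have "\<dots> \<le> (1-t) * ((a powr pp + b powr pp) / A powr pp) + t * ((c powr pp + e powr pp) / C powr pp)"
      using c1 c2 by (simp add: powr_divide assms Apos add_divide_distrib algebra_simps)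
    also have "\<dots> = 1" using Apos by (simp add: Ap[symmetric] Cp[symmetric])
    finally have "(a+c) powr pp + (b+e) powr pp \<le> (A+C) powr pp"
      using Apos by (simp add: divide_le_eq)
    then have "nu (a+c) (b+e) \<le> ((A+C) powr pp) powr bet"
      unfolding nu_def using bet_pos by (intro powr_mono2) auto
    also have "\<dots> = A + C" using Apos by (simp add: powr_powr mult.commute[of pp] bet_pp)
    finally show ?thesis unfolding A_def C_def .
  qed
qed

lemma nu_00: "nu 0 0 = 0" unfolding nu_def using pp_ge1 by simp

lemma minkowski_sum:
  fixes f g :: "'a \<Rightarrow> real"
  assumes "finite P" "\<And>x. x \<in> P \<Longrightarrow> 0 \<le> f x" "\<And>x. x \<in> P \<Longrightarrow> 0 \<le> g x"
  shows "nu (\<Sum>x\<in>P. f x) (\<Sum>x\<in>P. g x) \<le> (\<Sum>x\<in>P. nu (f x) (g x))"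
  using assms
proof (induction P rule: finite_induct)
  case empty then show ?case by (simp add: nu_00)
next
  case (insert y F)
  have "nu (\<Sum>x\<in>insert y F. f x) (\<Sum>x\<in>insert y F. g x) = nu (f y + sum f F) (g y + sum g F)"
    using insert by simp
  also have "\<dots> \<le> nu (f y) (g y) + nu (sum f F) (sum g F)"
    by (rule minkowski2) (use insert in \<open>auto intro: sum_nonneg\<close>)
  also have "\<dots> \<le> nu (f y) (g y) + (\<Sum>x\<in>F. nu (f x) (g x))"
    using insert by auto
  also have "\<dots> = (\<Sum>x\<in>insert y F. nu (f x) (g x))" using insert by simp
  finally show ?case .
qed

lemma sq_powr_half: fixes x r :: real shows "0 \<le> x \<Longrightarrow> (x^2) powr (r/2) = x powr r"
proof (cases "x = 0")
  case False
  assume "0 \<le> x"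
  then have "x^2 = x powr 2" by (simp add: powr_numeral)
  then show ?thesis by (simp add: powr_powr)
qed simp

lemma numeric_key:
  fixes N e :: real
  assumes "0 < N" "0 \<le> e" "e \<le> N/2"
  shows "N/2 + e^2/N \<le> nu (N/2) e"
proof -
  define y where "y = (2*e/N)^2"
  have y01: "0 \<le> y" "y \<le> 1" unfolding y_def using assms by (auto simp: power_le_one)
  have eq1: "N/2 + e^2/N = (N/2) * ((1-y)*1 + y*(3/2))"
    unfolding y_def using assms by (simp add: field_simps power2_eq_square)
  have c: "((1-y)*1 + y*(3/2)) powr pp \<le> (1-y) * 1 powr pp + y * (3/2) powr pp"
    by (rule conv_pp) (use y01 in auto)
  then have c': "((1-y)*1 + y*(3/2)) powr pp \<le> 1 + y"
    using three_half_pp by simp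
  have "y \<le> y powr (pp/2)"
    using powr_mono'[of "pp/2" 1 y] y01 pp_le2 by simp
  also have "\<dots> = (2*e/N) powr pp" unfolding y_def by (rule sq_powr_half) (use assms in auto)
  finally have yle: "y \<le> (2*e/N) powr pp" .
  have "(N/2 + e^2/N) powr pp = (N/2) powr pp * ((1-y)*1 + y*(3/2)) powr pp"
    unfolding eq1 by (rule powr_mult)
  also have "\<dots> \<le> (N/2) powr pp * (1 + (2*e/N) powr pp)"
    using c' yle by (intro mult_left_mono) auto
  also have "\<dots> = (N/2) powr pp + ((N/2) * (2*e/N)) powr pp"
    by (simp only: powr_mult distrib_left mult_1_right)
  also have "(N/2) * (2*e/N) = e" using assms by simp
  finally have le: "(N/2 + e^2/N) powr pp \<le> (N/2) powr pp + e powr pp" .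
  have "N/2 + e^2/N = ((N/2 + e^2/N) powr pp) powr bet"
    using assms by (simp add: powr_powr bet_pp mult.commute[of pp])
  also have "\<dots> \<le> nu (N/2) e" unfolding nu_def using le bet_pos by (intro powr_mono2) auto
  finally show ?thesis .
qed

lemma four_powr_bet: "4 powr bet = 9/4"
proof -
  have "(4::real) powr bet = (2*2) powr bet" by simp
  also have "\<dots> = 2 powr bet * 2 powr bet" by (rule powr_mult)
  finally show ?thesis by (simp add: two_powr_bet)
qed

lemma three_powr_bet: "7/4 \<le> (3::real) powr bet"
proof -
  have s2: "sqrt 2 \<le> (3/2::real)" by (rule power2_le_imp_le) (auto simp: power2_eq_square)
  have s3: "(7/6::real) \<le> sqrt (3/2)" by (rule real_le_rsqrt) (auto simp: power2_eq_square)
  have "(2::real) powr (3/2) = 2 powr (1 + 1/2)" by simp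
  also have "\<dots> = 2 * sqrt 2" by (simp only: powr_add powr_half_sqrt) simp
  finally have a: "(2::real) powr (3/2) \<le> 3" using s2 by simp
  have "(3/2::real) powr (3/2) = (3/2) powr (1 + 1/2)" by simp
  also have "\<dots> = (3/2) * sqrt (3/2)" by (simp only: powr_add powr_half_sqrt) simp
  finally have b: "7/4 \<le> (3/2::real) powr (3/2)" using s3 by simp
  have "(3/2::real) powr (3/2) = (2 powr bet) powr (3/2)" by (simp add: two_powr_bet)
  also have "\<dots> = (2 powr (3/2)) powr bet" by (rule powr_powr_swap)
  also have "\<dots> \<le> 3 powr bet" using a bet_pos by (intro powr_mono2) auto
  finally show ?thesis using b by simp
qed

lemma nat_ineq: "real h powr bet / 2 + 1 \<le> real (h+1) powr bet"
proof -
  consider "h = 0" | "h = 1" | "h = 2" | "h = 3" | "h \<ge> 4" by linarith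
  then show ?thesis
  proof cases
    case 1 then show ?thesis by simp
  next
    case 2 then show ?thesis by (simp add: two_powr_bet)
  next
    case 3 then show ?thesis using three_powr_bet two_powr_bet by simp
  next
    case 4
    have "(3::real) powr bet \<le> 4 powr bet" using bet_pos by (intro powr_mono2) auto
    then show ?thesis using 4 four_powr_bet by simp
  next
    case 5
    have "(4::real) powr bet \<le> real h powr bet" using bet_pos 5 by (intro powr_mono2) auto
    moreover have "real h powr bet \<le> real (h+1) powr bet" using bet_pos by (intro powr_mono2) auto
    ultimately show ?thesis using four_powr_bet by simp
  qed
qed

lemma nat_powr_le: "real k powr bet \<le> real k"
proof (cases "k = 0")
  case False
  then have "real k powr bet \<le> real k powr 1" using bet_le1 by (intro powr_mono) auto
  then show ?thesis by simp
qed simp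

lemma nu_nat: "real (h + d) powr bet = nu (real h powr bet) (real d)" if "d \<le> 1" for h d :: nat
proof -
  have hh: "(real h powr bet) powr pp = real h" by (simp add: powr_powr bet_pp)
  have dd: "real d powr pp = real d" using that pp_ge1 by (cases d) auto
  show ?thesis unfolding nu_def hh dd by simp
qed

lemma step:
  fixes P Q :: "'a set" and hp hq :: "'a \<Rightarrow> nat" and N :: real
  assumes fin: "finite P" "finite Q" and N: "0 < N" and le: "card Q \<le> card P" and leN: "real (card P) \<le> N"
    and IHP: "2 * real (card P) * (N - real (card P)) / N \<le> (\<Sum>x\<in>P. real (hp x) powr bet)"
    and IHQ: "2 * real (card Q) * (N - real (card Q)) / N \<le> (\<Sum>x\<in>Q. real (hq x) powr bet)"
  shows "2 * (real (card P) + real (card Q)) * (2*N - (real (card P) + real (card Q))) / (2*N)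
     \<le> (\<Sum>x\<in>P. real (hp x + (if x \<in> Q then 0 else 1)) powr bet)
      + (\<Sum>x\<in>Q. real (hq x + (if x \<in> P then 0 else 1)) powr bet)"
proof -
  define p where "p = real (card P)"
  define q where "q = real (card Q)"
  define e where "e = p - q"
  define X where "X = (\<Sum>x\<in>P. real (hp x) powr bet)"
  define L where "L = 2 * p * (N - p) / N"
  have e0: "0 \<le> e" unfolding e_def p_def q_def using le by simp
  have q0: "0 \<le> q" unfolding q_def by simp
  have LX: "L \<le> X" unfolding L_def X_def p_def using IHP .
  have L0: "0 \<le> L" unfolding L_def p_def using leN N by simp
  have LN: "L \<le> N/2"
  proof -
    have "2 * p * (N - p) \<le> N * N / 2" using zero_le_power2[of "N - 2*p"] by (simp add: power2_eq_square algebra_simps)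
    then show ?thesis unfolding L_def using N by (simp add: divide_le_eq)
  qed
  have cardD: "e \<le> real (card (P - Q))"
  proof -
    have "card P - card Q \<le> card (P - Q)" by (rule diff_card_le_card_Diff) (rule fin(2))
    then show ?thesis unfolding e_def p_def q_def using le by linarith
  qed
  have sumD: "(\<Sum>x\<in>P. real (if x \<in> Q then 0 else 1::nat)) = real (card (P - Q))"
  proof -
    have "(\<Sum>x\<in>P. real (if x \<in> Q then 0 else 1::nat)) = (\<Sum>x\<in>P. if x \<in> P - Q then 1 else 0)"
      by (intro sum.cong) auto
    also have "\<dots> = real (card (P - Q))" using fin by (simp add: sum.If_cases Int_absorb1 Diff_eq Compl_eq)
    finally show ?thesis .
  qed
  have Qpart: "2 * q * (N - q) / N \<le> (\<Sum>x\<in>Q. real (hq x + (if x \<in> P then 0 else 1)) powr bet)"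
  proof -
    have "(\<Sum>x\<in>Q. real (hq x) powr bet) \<le> (\<Sum>x\<in>Q. real (hq x + (if x \<in> P then 0 else 1)) powr bet)"
      using bet_pos by (intro sum_mono powr_mono2) auto
    then show ?thesis using IHQ unfolding q_def by linarith
  qed
  have ident: "2 * (p + q) * (2*N - (p + q)) / (2*N) = L + e^2/N + 2 * q * (N - q) / N"
    unfolding L_def e_def using N by (simp add: field_simps power2_eq_square)
  show ?thesis
  proof (cases "N < 2*e")
    case True
    have "(\<Sum>x\<in>P. real (hp x + (if x \<in> Q then 0 else 1)) powr bet)
        \<ge> (\<Sum>x\<in>P. real (hp x) powr bet / 2 + real (if x \<in> Q then 0 else 1::nat))"
    proof (intro sum_mono)
      fix x assume "x \<in> P"
      show "real (hp x) powr bet / 2 + real (if x \<in> Q then 0 else 1::nat) \<le> real (hp x + (if x \<in> Q then 0 else 1)) powr bet"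
        using nat_ineq[of "hp x"] by (cases "x \<in> Q") auto
    qed
    also have "(\<Sum>x\<in>P. real (hp x) powr bet / 2 + real (if x \<in> Q then 0 else 1::nat)) = X/2 + real (card (P - Q))"
      unfolding X_def sumD[symmetric] by (simp add: sum.distrib sum_divide_distrib)
    finally have Pp: "X/2 + e \<le> (\<Sum>x\<in>P. real (hp x + (if x \<in> Q then 0 else 1)) powr bet)"
      using cardD by linarith
    have "q * (2*p - q - N) \<ge> 0" using True q0 unfolding e_def by (intro mult_nonneg_nonneg) auto
    then have "(p + q) * (2*N - (p + q)) \<le> p * (N - p) + N * e + 2 * q * (N - q)"
      unfolding e_def by (simp add: algebra_simps power2_eq_square)
    then have "(p + q) * (2*N - (p + q)) / N \<le> (p * (N - p) + N * e + 2 * q * (N - q)) / N"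
      using N by (intro divide_right_mono) auto
    also have "\<dots> = L/2 + e + 2 * q * (N - q) / N"
      unfolding L_def using N by (simp add: add_divide_distrib)
    also have "(p + q) * (2*N - (p + q)) / N = 2 * (p + q) * (2*N - (p + q)) / (2*N)"
      using N by (simp add: field_simps)
    finally have "2 * (p + q) * (2*N - (p + q)) / (2*N) \<le> L/2 + e + 2 * q * (N - q) / N" .
    then show ?thesis using Pp Qpart LX unfolding p_def[symmetric] q_def[symmetric] by linarith
  next
    case False
    have "(\<Sum>x\<in>P. real (hp x + (if x \<in> Q then 0 else 1)) powr bet)
        = (\<Sum>x\<in>P. nu (real (hp x) powr bet) (real (if x \<in> Q then 0 else 1::nat)))"
      by (intro sum.cong refl nu_nat) auto
    also have "\<dots> \<ge> nu X (real (card (P - Q)))"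
      unfolding X_def sumD[symmetric] by (rule minkowski_sum) (use fin in auto)
    finally have P1: "nu X (real (card (P - Q))) \<le> (\<Sum>x\<in>P. real (hp x + (if x \<in> Q then 0 else 1)) powr bet)" .
    have P2: "nu L e \<le> nu X (real (card (P - Q)))" by (rule nu_mono) (use L0 e0 LX cardD in auto)
    have "nu (L + (N/2 - L)) (e + 0) \<le> nu L e + nu (N/2 - L) 0"
      by (rule minkowski2) (use L0 e0 LN in auto)
    then have P3: "nu (N/2) e \<le> nu L e + (N/2 - L)" using LN nu_zero2[of "N/2 - L"] by simp
    have P4: "N/2 + e^2/N \<le> nu (N/2) e" by (rule numeric_key) (use N e0 False in auto)
    show ?thesis using P1 P2 P3 P4 Qpart ident unfolding p_def[symmetric] q_def[symmetric] by linarith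
  qed
qed

definition flip :: "nat \<Rightarrow> bool list \<Rightarrow> bool list" where
  "flip i x = x[i := (\<not> x!i)]"

definition hh :: "bool list set \<Rightarrow> bool list \<Rightarrow> nat" where
  "hh S x = card {i. i < length x \<and> flip i x \<notin> S}"

lemma flip_0[simp]: "flip 0 (b#x) = (\<not>b)#x" by (simp add: flip_def)
lemma flip_Suc[simp]: "flip (Suc i) (b#x) = b # flip i x" by (simp add: flip_def)
lemma length_flip[simp]: "length (flip i x) = length x" by (simp add: flip_def)

lemma card_lessSuc: "card {i. i < Suc m \<and> P i} = card {i. i < m \<and> P (Suc i)} + (if P 0 then 1 else 0)"
proof -
  have cs: "card (Suc ` {i. i < m \<and> P (Suc i)}) = card {i. i < m \<and> P (Suc i)}"
    by (rule card_image) auto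
  show ?thesis
  proof (cases "P 0")
    case True
    have eq: "{i. i < Suc m \<and> P i} = insert 0 (Suc ` {i. i < m \<and> P (Suc i)})"
    proof (intro set_eqI iffI)
      fix i assume "i \<in> {i. i < Suc m \<and> P i}"
      then show "i \<in> insert 0 (Suc ` {i. i < m \<and> P (Suc i)})" by (cases i) auto
    qed (use True in auto)
    show ?thesis unfolding eq using True cs by (subst card_insert_disjoint) auto
  next
    case False
    have eq: "{i. i < Suc m \<and> P i} = Suc ` {i. i < m \<and> P (Suc i)}"
    proof (intro set_eqI iffI)
      fix i assume "i \<in> {i. i < Suc m \<and> P i}"
      then show "i \<in> Suc ` {i. i < m \<and> P (Suc i)}" using False by (cases i) auto
    qed auto
    show ?thesis unfolding eq using False cs by simp
  qed
qed

lemma hh_Cons: "hh S (b#x) = hh {y. b#y \<in> S} x + (if (\<not>b)#x \<in> S then 0 else 1)"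
  unfolding hh_def by (simp add: card_lessSuc)

lemma finite_cube: "finite (cube n)"
proof -
  have "cube n = {xs. set xs \<subseteq> (UNIV::bool set) \<and> length xs = n}" unfolding cube_def by auto
  then show ?thesis using finite_lists_length_eq[of "UNIV::bool set" n] by simp
qed

lemma card_cube: "card (cube n) = 2^n"
proof -
  have "cube n = {xs. set xs \<subseteq> (UNIV::bool set) \<and> length xs = n}" unfolding cube_def by auto
  then show ?thesis using card_lists_length_eq[of "UNIV::bool set" n] by simp
qed

lemma KP: "S \<subseteq> cube n \<Longrightarrow> 2 * real (card S) * (2^n - real (card S)) / 2^n \<le> (\<Sum>x\<in>S. real (hh S x) powr bet)"
proof (induction n arbitrary: S)
  case 0
  then have "card S \<le> 1" using card_mono[OF finite_cube 0] card_cube[of 0] by simp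
  then have "2 * real (card S) * (2^0 - real (card S)) / 2^0 \<le> 0"
    by (cases "card S") auto
  also have "0 \<le> (\<Sum>x\<in>S. real (hh S x) powr bet)" by (intro sum_nonneg) auto
  finally show ?case .
next
  case (Suc n)
  define S0 where "S0 = {x. False#x \<in> S}"
  define S1 where "S1 = {x. True#x \<in> S}"
  have sub: "S0 \<subseteq> cube n" "S1 \<subseteq> cube n" using Suc.prems unfolding S0_def S1_def cube_def by auto
  have fin: "finite S0" "finite S1" using sub finite_cube finite_subset by blast+
  have leN: "card S0 \<le> 2^n" "card S1 \<le> 2^n" using card_mono[OF finite_cube sub(1)] card_mono[OF finite_cube sub(2)] card_cube by auto
  have Sdec: "S = Cons False ` S0 \<union> Cons True ` S1"
  proof (intro set_eqI iffI)
    fix x assume "x \<in> S"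
    then have "length x = Suc n" using Suc.prems unfolding cube_def by auto
    then obtain b y where "x = b#y" by (cases x) auto
    then show "x \<in> Cons False ` S0 \<union> Cons True ` S1" using `x \<in> S` unfolding S0_def S1_def by (cases b) auto
  qed (auto simp: S0_def S1_def)
  have disj: "Cons False ` S0 \<inter> Cons True ` S1 = {}" by auto
  have cardS: "card S = card S0 + card S1"
    unfolding Sdec using fin by (subst card_Un_disjoint) (auto simp: card_image)
  have sumS: "(\<Sum>x\<in>S. real (hh S x) powr bet)
      = (\<Sum>x\<in>S0. real (hh S0 x + (if x \<in> S1 then 0 else 1)) powr bet)
      + (\<Sum>x\<in>S1. real (hh S1 x + (if x \<in> S0 then 0 else 1)) powr bet)"
  proof -
    have "(\<Sum>x\<in>S. real (hh S x) powr bet)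
        = (\<Sum>x\<in>Cons False ` S0. real (hh S x) powr bet) + (\<Sum>x\<in>Cons True ` S1. real (hh S x) powr bet)"
      unfolding Sdec using fin disj by (intro sum.union_disjoint) auto
    also have "(\<Sum>x\<in>Cons False ` S0. real (hh S x) powr bet) = (\<Sum>x\<in>S0. real (hh S (False#x)) powr bet)"
      by (subst sum.reindex) auto
    also have "(\<Sum>x\<in>Cons True ` S1. real (hh S x) powr bet) = (\<Sum>x\<in>S1. real (hh S (True#x)) powr bet)"
      by (subst sum.reindex) auto
    finally show ?thesis unfolding hh_Cons S0_def[symmetric] S1_def[symmetric]
      by (simp add: S0_def S1_def)
  qed
  note IH0 = Suc.IH[OF sub(1)]
  note IH1 = Suc.IH[OF sub(2)]
  have N: "(0::real) < 2^n" by simp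
  have goal_eq: "2 * real (card S) * (2 ^ Suc n - real (card S)) / 2 ^ Suc n
     = 2 * (real (card S0) + real (card S1)) * (2*2^n - (real (card S0) + real (card S1))) / (2*2^n)"
    unfolding cardS by simp
  show ?case
  proof (cases "card S1 \<le> card S0")
    case True
    show ?thesis unfolding goal_eq sumS
      by (rule step[OF fin N True _ IH0 IH1]) (use leN in auto)
  next
    case False
    have "2 * (real (card S1) + real (card S0)) * (2*2^n - (real (card S1) + real (card S0))) / (2*2^n)
      \<le> (\<Sum>x\<in>S1. real (hh S1 x + (if x \<in> S0 then 0 else 1)) powr bet)
      + (\<Sum>x\<in>S0. real (hh S0 x + (if x \<in> S1 then 0 else 1)) powr bet)"
      by (rule step[OF fin(2) fin(1) N _ _ IH1 IH0]) (use leN False in auto)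
    then show ?thesis unfolding goal_eq sumS by (simp add: add.commute)
  qed
qed

lemma flip_inj: "i < length y \<Longrightarrow> j < length y \<Longrightarrow> flip i y = flip j y \<Longrightarrow> i = j"
proof (rule ccontr)
  assume a: "i < length y" "j < length y" "flip i y = flip j y" "i \<noteq> j"
  then have "(flip i y)!i = (flip j y)!i" by simp
  then show False using a by (simp add: flip_def nth_list_update)
qed

lemma hadj_flip: "i < length y \<Longrightarrow> hadj (flip i y) y"
proof -
  assume i: "i < length y"
  have "{j. j < length (flip i y) \<and> flip i y ! j \<noteq> y ! j} = {i}"
    using i by (auto simp: flip_def nth_list_update)
  then show ?thesis unfolding hadj_def by simp
qed

theorem corollary1p5:
  fixes n :: nat and A B W :: "bool list set"
  assumes "n \<ge> 1"
    and "A \<union> B \<union> W = cube n"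
    and "A \<inter> B = {}" and "A \<inter> W = {}" and "B \<inter> W = {}"
    and "card A = 2 ^ (n - 1)"
  shows "real (card (nabla A B)) + real n powr (log 2 (3/2)) * real (card W) \<ge> 2 ^ (n - 1)"
proof -
  define S where "S = B \<union> W"
  have Ssub: "S \<subseteq> cube n" using assms(2) unfolding S_def by auto
  have finA: "finite A" and finB: "finite B" and finW: "finite W"
    using assms(2) finite_cube finite_subset by (metis Un_upper1 Un_upper2 le_supE)+
  have cube_eq: "cube n = A \<union> S" using assms(2) unfolding S_def by auto
  have "card (cube n) = card A + card S"
    unfolding cube_eq using finA finB finW assms(3,4) unfolding S_def by (subst card_Un_disjoint) auto
  then have cS: "card S = 2^(n-1)" using card_cube[of n] assms(1,6)
    by (metis add_diff_cancel_left' mult_2 power_eq_if not_one_le_zero)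
  have pw: "(2::real)^n = 2 * 2^(n-1)" using assms(1) by (metis One_nat_def Suc_pred less_eq_Suc_le power_Suc)
  have "2 * real (card S) * (2^n - real (card S)) / 2^n = 2^(n-1)"
    unfolding cS pw by simp
  then have KPS: "2^(n-1) \<le> (\<Sum>x\<in>S. real (hh S x) powr bet)" using KP[OF Ssub] by simp
  have split: "(\<Sum>x\<in>S. real (hh S x) powr bet) = (\<Sum>x\<in>B. real (hh S x) powr bet) + (\<Sum>x\<in>W. real (hh S x) powr bet)"
    unfolding S_def using finB finW assms(5) by (rule sum.union_disjoint)
  have Wb: "(\<Sum>x\<in>W. real (hh S x) powr bet) \<le> real (card W) * real n powr bet"
  proof -
    have "real (hh S x) powr bet \<le> real n powr bet" if "x \<in> W" for x
    proof -
      have len: "length x = n" using that assms(2) unfolding cube_def by auto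
      have "hh S x \<le> card {..<length x}" unfolding hh_def by (intro card_mono) auto
      then have "hh S x \<le> n" using len by simp
      then show ?thesis using bet_pos by (intro powr_mono2) auto
    qed
    then show ?thesis using sum_bounded_above[of W "\<lambda>x. real (hh S x) powr bet" "real n powr bet"] by simp
  qed
  define T where "T = Sigma B (\<lambda>y. {i. i < n \<and> flip i y \<in> A})"
  have hhB: "hh S y = card {i. i < n \<and> flip i y \<in> A}" if "y \<in> B" for y
  proof -
    have len: "length y = n" using that assms(2) unfolding cube_def by auto
    have "{i. i < length y \<and> flip i y \<notin> S} = {i. i < n \<and> flip i y \<in> A}"
    proof (intro set_eqI iffI)
      fix i assume i: "i \<in> {i. i < length y \<and> flip i y \<notin> S}"
      then have "flip i y \<in> cube n" using len unfolding cube_def by simp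
      then show "i \<in> {i. i < n \<and> flip i y \<in> A}" using i len unfolding cube_eq by auto
    next
      fix i assume i: "i \<in> {i. i < n \<and> flip i y \<in> A}"
      then show "i \<in> {i. i < length y \<and> flip i y \<notin> S}" using len assms(3,4) unfolding S_def by auto
    qed
    then show ?thesis unfolding hh_def by simp
  qed
  have cT: "card T = (\<Sum>y\<in>B. hh S y)"
    unfolding T_def using finB by (subst card_SigmaI) (auto simp: hhB)
  have "card T \<le> card (nabla A B)"
  proof -
    have "card T = card ((\<lambda>(y,i). (flip i y, y)) ` T)"
    proof (rule card_image[symmetric], rule inj_onI)
      fix u v assume u: "u \<in> T" and v: "v \<in> T" and e: "(case u of (y, i) \<Rightarrow> (flip i y, y)) = (case v of (y, i) \<Rightarrow> (flip i y, y))"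
      obtain y i where yi: "u = (y,i)" by (cases u)
      obtain y' j where yj: "v = (y',j)" by (cases v)
      have "y = y'" "flip i y = flip j y" using e yi yj by auto
      moreover have "length y = n" using u yi assms(2) unfolding T_def cube_def by auto
      ultimately have "i = j" using u v yi yj flip_inj[of i y j] unfolding T_def by auto
      then show "u = v" using yi yj `y = y'` by simp
    qed
    also have "\<dots> \<le> card (nabla A B)"
    proof (rule card_mono)
      show "finite (nabla A B)"
        by (rule finite_subset[of _ "A \<times> B"]) (auto simp: nabla_def finA finB)
      show "(\<lambda>(y,i). (flip i y, y)) ` T \<subseteq> nabla A B"
      proof
        fix z assume "z \<in> (\<lambda>(y,i). (flip i y, y)) ` T"
        then obtain y i where z: "z = (flip i y, y)" and yi: "y \<in> B" "i < n" "flip i y \<in> A"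
          unfolding T_def by auto
        have "length y = n" using yi assms(2) unfolding cube_def by auto
        then show "z \<in> nabla A B" unfolding z nabla_def using yi hadj_flip[of i y] by auto
      qed
    qed
    finally show ?thesis .
  qed
  then have Bb: "(\<Sum>x\<in>B. real (hh S x) powr bet) \<le> real (card (nabla A B))"
  proof -
    have "(\<Sum>x\<in>B. real (hh S x) powr bet) \<le> (\<Sum>x\<in>B. real (hh S x))"
      by (intro sum_mono nat_powr_le)
    also have "\<dots> = real (card T)" unfolding cT by simp
    finally show ?thesis using `card T \<le> card (nabla A B)` by linarith
  qed
  show ?thesis using KPS split Wb Bb unfolding bet_def by (simp add: mult.commute)
qed

end
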